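(* Let $k$ be a field of characteristic $0$, $R=k[x_1,\ldots,x_n]$, and let $I\subset R$ be a homogeneous Artinian ideal, with $f_2,\ldots,f_n$ and $J_1,\ldots,J_{n-1}$ defined for $\mathrm{gin}(I)$ as in the context. Then $\mathrm{gin}(I)$ is almost reverse lexicographic if and only if for every $1\le i\le n-1$ the following two conditions hold: (1) $f_{i+1}(0,\ldots,0,|\alpha|+1)+1\le f_{i+1}(\alpha)$ for every $\alpha=(\alpha_1,\ldots,\alpha_i)\in J_i$; (2) $f_{i+1}(\beta)\le f_{i+1}(\alpha)$ for all $\alpha,\beta\in J_i$ with $|\alpha|=|\beta|$ and $\alpha<\beta$.
   Context: Monomials of $R$ are ordered by the degree reverse lexicographic order with $x_1>\cdots>x_n$; $\mathrm{gin}(I)$ is the generic initial ideal of $I$ with respect to this order. A homogeneous ideal is Artinian if $R/I$ is finite-dimensional over $k$. A monomial ideal $J$ is almost reverse lexicographic if for every minimal generator $m$ of $J$ and every monomial $M$ with $\deg M=\deg m$ and $M>m$, we have $M\in J$. Define $f_1=\min\{t\mid x_1^t\in\mathrm{gin}(I)\}$ and for $2\le i\le n$, $f_i(\alpha_1,\ldots,\alpha_{i-1})=\min\{t\ge0\mid x_1^{\alpha_1}\cdots x_{i-1}^{\alpha_{i-1}}x_i^t\in\mathrm{gin}(I)\}$ (value $\infty$ if none). For $1\le i\le n-1$, $J_i=\{(\alpha_1,\ldots,\alpha_i)\in\mathbb{Z}_{\ge0}^i\mid \alpha_1<f_1,\ \alpha_j<f_j(\alpha_1,\ldots,\alpha_{j-1})\text{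 for }2\le j\le i\}$. For $\alpha\in\mathbb{Z}_{\ge0}^i$, $|\alpha|=\sum_j\alpha_j$, and for $\alpha,\beta\in\mathbb{Z}_{\ge0}^i$ we write $\alpha<\beta$ if $x_1^{\alpha_1}\cdots x_i^{\alpha_i}<x_1^{\beta_1}\cdots x_i^{\beta_i}$ in the reverse lexicographic order. *)

theory Defs
  imports "HOL-Library.Poly_Mapping" "HOL-Library.Extended_Nat"
begin

text \<open>Variables x_1,...,x_n are encoded by the indices 0,...,n-1.
  A monomial is a finitely supported exponent vector (nat =>0 nat);
  a polynomial over k is a finitely supported map from monomials to k.\<close>

type_synonym monom = "nat \<Rightarrow>\<^sub>0 nat"
type_synonym 'k mpoly = "monom \<Rightarrow>\<^sub>0 'k"

definition mdeg :: "monom \<Rightarrow> nat" where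
  "mdeg m = (\<Sum>i\<in>Poly_Mapping.keys m. Poly_Mapping.lookup m i)"

definition monom_in :: "nat \<Rightarrow> monom \<Rightarrow> bool" where
  "monom_in n m \<longleftrightarrow> Poly_Mapping.keys m \<subseteq> {..<n}"

definition poly_ring :: "nat \<Rightarrow> ('k::field) mpoly set" where
  "poly_ring n = {f. \<forall>m\<in>Poly_Mapping.keys f. monom_in n m}"

definition const :: "'k::field \<Rightarrow> 'k mpoly" where
  "const c = Poly_Mapping.single 0 c"

definition is_ideal :: "nat \<Rightarrow> ('k::field) mpoly set \<Rightarrow> bool" where
  "is_ideal n I \<longleftrightarrow> I \<subseteq> poly_ring n \<and> 0 \<in> I \<and>
     (\<forall>f\<in>I. \<forall>g\<in>I. f + g \<in> I) \<and> (\<forall>f\<in>I. \<forall>r\<in>poly_ring n. r * f \<in> I)"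

definition hom_comp :: "nat \<Rightarrow> ('k::field) mpoly \<Rightarrow> 'k mpoly" where
  "hom_comp d f = (\<Sum>m\<in>{m\<in>Poly_Mapping.keys f. mdeg m = d}. Poly_Mapping.single m (Poly_Mapping.lookup f m))"

definition homogeneous_ideal :: "nat \<Rightarrow> ('k::field) mpoly set \<Rightarrow> bool" where
  "homogeneous_ideal n I \<longleftrightarrow> is_ideal n I \<and> (\<forall>f\<in>I. \<forall>d. hom_comp d f \<in> I)"

text \<open>Artinian: R/I is a finite-dimensional k-vector space, i.e. it is spanned by the
  classes of finitely many polynomials.\<close>
definition artinian :: "nat \<Rightarrow> ('k::field) mpoly set \<Rightarrow> bool" where
  "artinian n I \<longleftrightarrow> (\<exists>B. finite B \<and> B \<subseteq> poly_ring n \<and>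
     (\<forall>f\<in>poly_ring n. \<exists>c. f - (\<Sum>b\<in>B. const (c b) * b) \<in> I))"

text \<open>Degree reverse lexicographic order with x_1 > ... > x_n: drl_less m m' means m < m'.\<close>
definition drl_less :: "monom \<Rightarrow> monom \<Rightarrow> bool" where
  "drl_less m m' \<longleftrightarrow> mdeg m < mdeg m' \<or>
     (mdeg m = mdeg m' \<and> (\<exists>j. Poly_Mapping.lookup m j > Poly_Mapping.lookup m' j \<and> (\<forall>l>j. Poly_Mapping.lookup m l = Poly_Mapping.lookup m' l)))"

definition lead_monom :: "('k::zero) mpoly \<Rightarrow> monom" where
  "lead_monom f = (THE m. m \<in> Poly_Mapping.keys f \<and> (\<forall>m'\<in>Poly_Mapping.keys f. m' \<noteq> m \<longrightarrow> drl_less m' m))"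

text \<open>Initial ideal, represented by the set of monomials it contains.\<close>
definition in_ideal :: "('k::field) mpoly set \<Rightarrow> monom set" where
  "in_ideal I = {lead_monom f | f. f \<in> I \<and> f \<noteq> 0}"

text \<open>n x n matrices as functions nat => nat => k (only entries < n matter).\<close>
definition invertible_n :: "nat \<Rightarrow> (nat \<Rightarrow> nat \<Rightarrow> 'k::field) \<Rightarrow> bool" where
  "invertible_n n g \<longleftrightarrow> (\<exists>h. (\<forall>i<n. \<forall>j<n. (\<Sum>l<n. g i l * h l j) = (if i = j then 1 else 0)) \<and>
                                (\<forall>i<n. \<forall>j<n. (\<Sum>l<n. h i l * g l j) = (if i = j then 1 else 0)))"

definition lin_form :: "nat \<Rightarrow> (nat \<Rightarrow> nat \<Rightarrow> 'k::field) \<Rightarrow> nat \<Rightarrow> 'k mpoly" where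
  "lin_form n g j = (\<Sum>i<n. Poly_Mapping.single (Poly_Mapping.single i 1) (g i j))"

definition act :: "nat \<Rightarrow> (nat \<Rightarrow> nat \<Rightarrow> 'k::field) \<Rightarrow> 'k mpoly \<Rightarrow> 'k mpoly" where
  "act n g f = (\<Sum>m\<in>Poly_Mapping.keys f. const (Poly_Mapping.lookup f m) * (\<Prod>j\<in>Poly_Mapping.keys m. lin_form n g j ^ Poly_Mapping.lookup m j))"

text \<open>Evaluation of a polynomial in the n^2 matrix entries (variable i*n+j is entry (i,j)).\<close>
definition eval_mat :: "nat \<Rightarrow> ('k::field) mpoly \<Rightarrow> (nat \<Rightarrow> nat \<Rightarrow> 'k) \<Rightarrow> 'k" where
  "eval_mat n P g = (\<Sum>m\<in>Poly_Mapping.keys P. Poly_Mapping.lookup P m * (\<Prod>v\<in>Poly_Mapping.keys m. g (v div n) (v mod n) ^ Poly_Mapping.lookup m v))"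

text \<open>J is the generic initial ideal of I: there is a nonempty Zariski open subset
  U = D(P) \<inter> GL_n(k) of GL_n(k) with in(g I) = J for all g in U
  (basic open sets D(P) \<inter> GL_n form a base of the Zariski topology on GL_n).\<close>
definition is_gin :: "nat \<Rightarrow> ('k::field) mpoly set \<Rightarrow> monom set \<Rightarrow> bool" where
  "is_gin n I J \<longleftrightarrow> (\<exists>P. P \<in> poly_ring (n * n) \<and>
     (\<exists>g. invertible_n n g \<and> eval_mat n P g \<noteq> 0) \<and>
     (\<forall>g. invertible_n n g \<and> eval_mat n P g \<noteq> 0 \<longrightarrow> in_ideal (act n g ` I) = J))"

definition mdvd :: "monom \<Rightarrow> monom \<Rightarrow> bool" where
  "mdvd m m' \<longleftrightarrow> (\<forall>i. Poly_Mapping.lookup m i \<le> Poly_Mapping.lookup m' i)"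

definition min_gen :: "monom set \<Rightarrow> monom \<Rightarrow> bool" where
  "min_gen J m \<longleftrightarrow> m \<in> J \<and> (\<forall>m'\<in>J. mdvd m' m \<longrightarrow> m' = m)"

definition almost_revlex :: "nat \<Rightarrow> monom set \<Rightarrow> bool" where
  "almost_revlex n J \<longleftrightarrow> (\<forall>m. min_gen J m \<longrightarrow>
     (\<forall>M. monom_in n M \<and> mdeg M = mdeg m \<and> drl_less m M \<longrightarrow> M \<in> J))"

definition list_monom :: "nat list \<Rightarrow> monom" where
  "list_monom a = (\<Sum>j<length a. Poly_Mapping.single j (a ! j))"

text \<open>f J a = f_{i+1}(a_1,...,a_i) where i = length a (so f J [] = f_1);
  value \<infinity> if no such t exists.\<close>
definition fval :: "monom set \<Rightarrow> nat list \<Rightarrow> enat" where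
  "fval J a = (if \<exists>t. list_monom (a @ [t]) \<in> J
               then enat (LEAST t. list_monom (a @ [t]) \<in> J) else \<infinity>)"

definition Jset :: "monom set \<Rightarrow> nat \<Rightarrow> nat list set" where
  "Jset J i = {a. length a = i \<and> (\<forall>j<i. enat (a ! j) < fval J (take j a))}"

end

theory Submission
  imports Defs
begin

lemma lookup_list_monom: "Poly_Mapping.lookup (list_monom a) j = (if j < length a then a ! j else 0)"
  unfolding list_monom_def by (simp add: lookup_sum lookup_single when_def)

lemma mdeg_superset: "finite S \<Longrightarrow> Poly_Mapping.keys m \<subseteq> S \<Longrightarrow> mdeg m = (\<Sum>i\<in>S. Poly_Mapping.lookup m i)"
  unfolding mdeg_def by (rule sum.mono_neutral_left) (auto simp: in_keys_iff)

lemma mdeg_bound: "(\<And>j. j \<ge> k \<Longrightarrow> Poly_Mapping.lookup m j = 0) \<Longrightarrow> mdeg m = (\<Sum>j<k. Poly_Mapping.lookup m j)"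
proof (rule mdeg_superset)
  assume h: "\<And>j. j \<ge> k \<Longrightarrow> Poly_Mapping.lookup m j = 0"
  show "Poly_Mapping.keys m \<subseteq> {..<k}"
  proof
    fix x assume "x \<in> Poly_Mapping.keys m"
    then have "Poly_Mapping.lookup m x \<noteq> 0" by (simp add: in_keys_iff)
    then show "x \<in> {..<k}" using h by (meson lessThan_iff not_le)
  qed
qed simp

lemma mdeg_add: "mdeg (a + b) = mdeg a + mdeg b"
proof -
  let ?S = "Poly_Mapping.keys a \<union> Poly_Mapping.keys b"
  have "mdeg (a+b) = (\<Sum>i\<in>?S. Poly_Mapping.lookup (a+b) i)"
    apply (rule mdeg_superset) using keys_add[of a b] by auto
  moreover have "mdeg a = (\<Sum>i\<in>?S. Poly_Mapping.lookup a i)" by (rule mdeg_superset) auto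
  moreover have "mdeg b = (\<Sum>i\<in>?S. Poly_Mapping.lookup b i)" by (rule mdeg_superset) auto
  ultimately show ?thesis by (simp add: lookup_add sum.distrib)
qed

lemma keys_list_monom: "Poly_Mapping.keys (list_monom a) \<subseteq> {..<length a}"
  by (auto simp: in_keys_iff lookup_list_monom split: if_splits)

lemma mdeg_list_monom: "mdeg (list_monom a) = sum_list a"
proof -
  have "mdeg (list_monom a) = (\<Sum>j<length a. Poly_Mapping.lookup (list_monom a) j)"
    by (rule mdeg_superset[OF _ keys_list_monom]) simp
  also have "\<dots> = (\<Sum>j<length a. a ! j)" by (simp add: lookup_list_monom)
  also have "\<dots> = sum_list a" by (simp add: sum_list_sum_nth atLeast0LessThan)
  finally show ?thesis .
qed

lemma monom_in_list_monom: "length a \<le> n \<Longrightarrow> monom_in n (list_monom a)"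
  using keys_list_monom unfolding monom_in_def by fastforce

lemma mdvd_mdeg: "mdvd a b \<Longrightarrow> mdeg a \<le> mdeg b"
proof -
  assume d: "mdvd a b"
  let ?S = "Poly_Mapping.keys a \<union> Poly_Mapping.keys b"
  have "mdeg a = (\<Sum>i\<in>?S. Poly_Mapping.lookup a i)" by (rule mdeg_superset) auto
  moreover have "mdeg b = (\<Sum>i\<in>?S. Poly_Mapping.lookup b i)" by (rule mdeg_superset) auto
  moreover have "(\<Sum>i\<in>?S. Poly_Mapping.lookup a i) \<le> (\<Sum>i\<in>?S. Poly_Mapping.lookup b i)"
    using d unfolding mdvd_def by (intro sum_mono) blast
  ultimately show ?thesis by linarith
qed

lemma mdvd_mdeg_eq: "mdvd a b \<Longrightarrow> mdeg a = mdeg b \<Longrightarrow> a = b"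
proof (rule ccontr)
  assume d: "mdvd a b" and e: "mdeg a = mdeg b" and ne: "a \<noteq> b"
  have "\<not> (\<forall>k. Poly_Mapping.lookup a k = Poly_Mapping.lookup b k)"
    using ne poly_mapping_eqI by metis
  then obtain k where k: "Poly_Mapping.lookup a k \<noteq> Poly_Mapping.lookup b k" by blast
  let ?S = "Poly_Mapping.keys a \<union> Poly_Mapping.keys b \<union> {k}"
  have "mdeg a = (\<Sum>i\<in>?S. Poly_Mapping.lookup a i)" by (rule mdeg_superset) auto
  moreover have "mdeg b = (\<Sum>i\<in>?S. Poly_Mapping.lookup b i)" by (rule mdeg_superset) auto
  moreover have "(\<Sum>i\<in>?S. Poly_Mapping.lookup a i) < (\<Sum>i\<in>?S. Poly_Mapping.lookup b i)"
  proof (rule sum_strict_mono_ex1)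
    show "\<forall>x\<in>?S. Poly_Mapping.lookup a x \<le> Poly_Mapping.lookup b x" using d unfolding mdvd_def by blast
    have "Poly_Mapping.lookup a k < Poly_Mapping.lookup b k" using d k unfolding mdvd_def by (simp add: le_neq_implies_less)
    then show "\<exists>x\<in>?S. Poly_Mapping.lookup a x < Poly_Mapping.lookup b x" by blast
  qed simp
  ultimately show False using e by linarith
qed

lemma mdvd_trans: "mdvd a b \<Longrightarrow> mdvd b c \<Longrightarrow> mdvd a c"
  unfolding mdvd_def using le_trans by blast

lemma mingen_exists:
  assumes "m \<in> G" shows "\<exists>g. min_gen G g \<and> mdvd g m"
proof -
  have "\<exists>g. (g \<in> G \<and> mdvd g m) \<and> (\<forall>y. y \<in> G \<and> mdvd y m \<longrightarrow> mdeg g \<le> mdeg y)"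
  proof -
    have "m \<in> G \<and> mdvd m m" using assms by (simp add: mdvd_def)
    from ex_has_least_nat[of "\<lambda>g. g \<in> G \<and> mdvd g m", OF this] show ?thesis .
  qed
  then obtain g where g: "g \<in> G" "mdvd g m" and min: "\<And>y. y \<in> G \<Longrightarrow> mdvd y m \<Longrightarrow> mdeg g \<le> mdeg y" by blast
  have "min_gen G g" unfolding min_gen_def
  proof (intro conjI ballI impI)
    fix m' assume "m' \<in> G" "mdvd m' g"
    then have "mdeg g \<le> mdeg m'" using min mdvd_trans g(2) by blast
    moreover have "mdeg m' \<le> mdeg g" using \<open>mdvd m' g\<close> by (rule mdvd_mdeg)
    ultimately have "mdeg m' = mdeg g" by simp
    with \<open>mdvd m' g\<close> show "m' = g" by (rule mdvd_mdeg_eq)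
  qed (rule g)
  with g show ?thesis by blast
qed

lemma lookup_app1: "Poly_Mapping.lookup (list_monom (a @ [t])) j =
   (if j < length a then a ! j else if j = length a then t else 0)"
  by (simp add: lookup_list_monom nth_append)

lemma lookup_rep2: "Poly_Mapping.lookup (list_monom (replicate k 0 @ [x, y])) j =
   (if j = k then x else if j = Suc k then y else 0)"
  by (auto simp: lookup_list_monom nth_append nth_Cons')

lemma lookup_rep1: "Poly_Mapping.lookup (list_monom (replicate k 0 @ [x])) j =
   (if j = k then x else 0)"
  by (auto simp: lookup_list_monom nth_append)

lemma mdvd_list: "length a \<le> length b \<Longrightarrow> (\<And>j. j < length a \<Longrightarrow> a ! j \<le> b ! j) \<Longrightarrow>
   mdvd (list_monom a) (list_monom b)"
  unfolding mdvd_def by (auto simp: lookup_list_monom)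

lemma enat_aux1: "(x::enat) \<le> enat (u - 1) \<Longrightarrow> 1 \<le> u \<Longrightarrow> x + 1 \<le> enat u"
  by (cases x) (auto simp: one_enat_def)

lemma enat_aux2: "(x::enat) + 1 \<le> enat u \<Longrightarrow> x \<le> enat (u - 1)"
  by (cases x) (auto simp: one_enat_def)

lemma sub_list: "(e::nat) \<le> sum_list d \<Longrightarrow> \<exists>d'. length d' = length d \<and> (\<forall>j<length d. d' ! j \<le> d ! j) \<and> sum_list d' = e"
proof (induction d arbitrary: e)
  case Nil then show ?case by (intro exI[of _ "[]"]) auto
next
  case (Cons x xs)
  then have "e - min x e \<le> sum_list xs" by simp
  from Cons.IH[OF this] obtain r where r: "length r = length xs" "\<forall>j<length xs. r ! j \<le> xs ! j" "sum_list r = e - min x e" by blast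
  show ?case
    by (rule exI[of _ "min x e # r"]) (use r in \<open>auto simp: nth_Cons' \<close>)
qed

lemma revlex_min:
  assumes "1 \<le> k" "length d = k" "d \<noteq> replicate (k - 1) 0 @ [sum_list d]"
  shows "drl_less (list_monom (replicate (k - 1) 0 @ [sum_list d])) (list_monom d)"
proof -
  have kl: "k - 1 < length d" using assms by simp
  have d: "d = take (k - 1) d @ [d ! (k - 1)]"
    using take_Suc_conv_app_nth[OF kl] assms by simp
  have sd: "sum_list d = sum_list (take (k - 1) d) + d ! (k - 1)"
    by (subst d) simp
  have lt: "d ! (k - 1) < sum_list d"
  proof (rule ccontr)
    assume "\<not> d ! (k - 1) < sum_list d"
    with sd have s0: "sum_list (take (k - 1) d) = 0" and e: "d ! (k - 1) = sum_list d" by simp_all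
    from s0 have "\<forall>x\<in>set (take (k - 1) d). x = 0" by simp
    then have "take (k - 1) d = replicate (k - 1) 0"
      by (intro replicate_eqI) (use assms(1,2) in auto)
    with d e have "d = replicate (k - 1) 0 @ [sum_list d]" by metis
    with assms(3) show False by simp
  qed
  show ?thesis unfolding drl_less_def mdeg_list_monom
  proof (rule disjI2, intro conjI exI[of _ "k - 1"])
    show "sum_list (replicate (k - 1) 0 @ [sum_list d]) = sum_list d" by simp
    show "Poly_Mapping.lookup (list_monom (replicate (k - 1) 0 @ [sum_list d])) (k - 1) >
       Poly_Mapping.lookup (list_monom d) (k - 1)"
      using lt assms by (simp add: lookup_list_monom nth_append)
    show "\<forall>l>k - 1. Poly_Mapping.lookup (list_monom (replicate (k - 1) 0 @ [sum_list d])) l =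
        Poly_Mapping.lookup (list_monom d) l"
      using assms by (auto simp: lookup_rep1 lookup_list_monom)
  qed
qed

locale upset =
  fixes n :: nat and G :: "monom set"
  assumes inn: "\<And>m. m \<in> G \<Longrightarrow> monom_in n m"
    and up: "\<And>m m'. m \<in> G \<Longrightarrow> mdvd m m' \<Longrightarrow> monom_in n m' \<Longrightarrow> m' \<in> G"
begin

lemma fval_le: assumes "length a < n" shows "fval G a \<le> enat t \<longleftrightarrow> list_monom (a @ [t]) \<in> G"
proof
  assume h: "list_monom (a @ [t]) \<in> G"
  then have ex: "\<exists>t. list_monom (a @ [t]) \<in> G" by blast
  have "(LEAST t. list_monom (a @ [t]) \<in> G) \<le> t" by (rule Least_le) (rule h)
  then show "fval G a \<le> enat t" using ex unfolding fval_def by simp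
next
  assume h: "fval G a \<le> enat t"
  then have ex: "\<exists>t. list_monom (a @ [t]) \<in> G" unfolding fval_def by (auto split: if_splits)
  define t0 where "t0 = (LEAST t. list_monom (a @ [t]) \<in> G)"
  have t0: "list_monom (a @ [t0]) \<in> G" unfolding t0_def using ex by (rule LeastI_ex)
  have "t0 \<le> t" using h ex unfolding fval_def t0_def by simp
  moreover have "mdvd (list_monom (a @ [t0])) (list_monom (a @ [t]))"
    by (rule mdvd_list) (use \<open>t0 \<le> t\<close> in \<open>auto simp: nth_append\<close>)
  ultimately show "list_monom (a @ [t]) \<in> G"
    using up[OF t0] monom_in_list_monom assms by simp
qed

lemma Jset_iff: assumes "1 \<le> i" "i \<le> n"
  shows "a \<in> Jset G i \<longleftrightarrow> length a = i \<and> list_monom a \<notin> G"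
proof -
  have "a \<in> Jset G i \<longleftrightarrow> length a = i \<and> (\<forall>j<i. list_monom (take (Suc j) a) \<notin> G)"
  proof -
    have "enat (a ! j) < fval G (take j a) \<longleftrightarrow> list_monom (take (Suc j) a) \<notin> G" if l: "length a = i" "j < i" for j
    proof -
      have "take (Suc j) a = take j a @ [a ! j]" using l by (simp add: take_Suc_conv_app_nth)
      moreover have "length (take j a) < n" using l assms by simp
      ultimately show ?thesis using fval_le[of "take j a" "a ! j"] by (simp add: not_le[symmetric])
    qed
    then show ?thesis unfolding Jset_def by auto
  qed
  also have "\<dots> \<longleftrightarrow> length a = i \<and> list_monom a \<notin> G"
  proof (intro iffI conjI)
    assume h: "length a = i \<and> (\<forall>j<i. list_monom (take (Suc j) a) \<notin> G)"
    show "length a = i" using h by simp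
    show "list_monom a \<notin> G"
    proof
      assume a: "list_monom a \<in> G"
      have "take (Suc (i - 1)) a = a" using h assms by simp
      moreover have "i - 1 < i" using assms by simp
      ultimately show False using h a by metis
    qed
  next
    assume h: "length a = i \<and> list_monom a \<notin> G"
    show "length a = i" using h by simp
    show "\<forall>j<i. list_monom (take (Suc j) a) \<notin> G"
    proof (intro allI impI notI)
      fix j assume j: "j < i" and hj: "list_monom (take (Suc j) a) \<in> G"
      have "mdvd (list_monom (take (Suc j) a)) (list_monom a)"
        by (rule mdvd_list) auto
      moreover have "monom_in n (list_monom a)" using h assms by (intro monom_in_list_monom) simp
      ultimately have "list_monom a \<in> G" by (rule up[OF hj])
      with h show False by simp
    qed
  qed
  finally show ?thesis .
qed

end

context upset begin

lemma gen_setup: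
  assumes i: "i < n" and la: "length a = i" and na: "list_monom a \<notin> G" and at: "list_monom (a @ [t]) \<in> G"
  obtains g where "min_gen G g" "1 \<le> Poly_Mapping.lookup g i" "Poly_Mapping.lookup g i \<le> t"
    "\<And>j. j < i \<Longrightarrow> Poly_Mapping.lookup g j \<le> a ! j" "\<And>j. j > i \<Longrightarrow> Poly_Mapping.lookup g j = 0"
    "mdeg g = (\<Sum>j<i. Poly_Mapping.lookup g j) + Poly_Mapping.lookup g i"
    "(\<Sum>j<i. Poly_Mapping.lookup g j) \<le> sum_list a"
proof -
  obtain g where g: "min_gen G g" "mdvd g (list_monom (a @ [t]))" using mingen_exists[OF at] by blast
  have gl: "Poly_Mapping.lookup g j \<le> (if j < i then a ! j else if j = i then t else 0)" for j
    using g(2) la unfolding mdvd_def by (metis lookup_app1)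
  have g0: "Poly_Mapping.lookup g j = 0" if "j > i" for j using gl[of j] that by simp
  have gi: "Poly_Mapping.lookup g i \<le> t" using gl[of i] by simp
  have ga: "Poly_Mapping.lookup g j \<le> a ! j" if "j < i" for j using gl[of j] that by simp
  have "1 \<le> Poly_Mapping.lookup g i"
  proof (rule ccontr)
    assume "\<not> 1 \<le> Poly_Mapping.lookup g i"
    then have z: "Poly_Mapping.lookup g i = 0" by simp
    have "mdvd g (list_monom a)" unfolding mdvd_def
    proof
      fix j show "Poly_Mapping.lookup g j \<le> Poly_Mapping.lookup (list_monom a) j"
        using ga[of j] g0[of j] z la by (cases "j < i"; cases "j = i") (auto simp: lookup_list_monom)
    qed
    moreover have "g \<in> G" using g(1) unfolding min_gen_def by simp
    ultimately have "list_monom a \<in> G" using up monom_in_list_monom la i by simp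
    with na show False by simp
  qed
  moreover have "mdeg g = (\<Sum>j<Suc i. Poly_Mapping.lookup g j)"
    by (rule mdeg_bound) (use g0 in simp)
  moreover have "(\<Sum>j<i. Poly_Mapping.lookup g j) \<le> sum_list a"
  proof -
    have "(\<Sum>j<i. Poly_Mapping.lookup g j) \<le> (\<Sum>j<i. a ! j)" by (rule sum_mono) (simp add: ga)
    also have "\<dots> = sum_list a" using la by (simp add: sum_list_sum_nth atLeast0LessThan)
    finally show ?thesis .
  qed
  ultimately show ?thesis using that g(1) gi ga g0 by simp
qed

end

context upset begin

lemma AR_C1:
  assumes AR: "almost_revlex n G" and i: "1 \<le> i" "i < n" and a: "a \<in> Jset G i"
  shows "fval G (replicate (i - 1) 0 @ [sum_list a + 1]) + 1 \<le> fval G a"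
proof (cases "fval G a")
  case infinity then show ?thesis by simp
next
  case (enat t)
  have la: "length a = i" and na: "list_monom a \<notin> G" using a Jset_iff i by auto
  have at: "list_monom (a @ [t]) \<in> G" using fval_le[of a t] la i enat by simp
  obtain g where g: "min_gen G g" "1 \<le> Poly_Mapping.lookup g i" "Poly_Mapping.lookup g i \<le> t"
    "\<And>j. j < i \<Longrightarrow> Poly_Mapping.lookup g j \<le> a ! j"
    "\<And>j. j > i \<Longrightarrow> Poly_Mapping.lookup g j = 0"
    "mdeg g = (\<Sum>j<i. Poly_Mapping.lookup g j) + Poly_Mapping.lookup g i"
    "(\<Sum>j<i. Poly_Mapping.lookup g j) \<le> sum_list a"
    by (rule gen_setup[OF i(2) la na at]) (rule that; assumption+)
  define s where "s = (\<Sum>j<i. Poly_Mapping.lookup g j)"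
  define u where "u = Poly_Mapping.lookup g i"
  define M where "M = list_monom (replicate (i - 1) 0 @ [s + 1, u - 1])"
  have i1: "Suc (i - 1) = i" using i by simp
  have lM: "Poly_Mapping.lookup M j = (if j = i - 1 then s + 1 else if j = i then u - 1 else 0)" for j
    unfolding M_def lookup_rep2 using i1 by simp
  have "mdeg M = s + u" unfolding M_def mdeg_list_monom using g(2) u_def by simp
  moreover have "mdeg g = s + u" using g(6) s_def u_def by simp
  ultimately have "drl_less g M" unfolding drl_less_def
    using g(2,5) lM u_def i by (intro disjI2 conjI exI[of _ i]) auto
  moreover have "monom_in n M" unfolding M_def using i by (intro monom_in_list_monom) simp
  moreover have "\<forall>M. monom_in n M \<and> mdeg M = mdeg g \<and> drl_less g M \<longrightarrow> M \<in> G"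
    using AR g(1) unfolding almost_revlex_def by blast
  ultimately have MG: "M \<in> G" using \<open>mdeg M = s + u\<close> \<open>mdeg g = s + u\<close> by simp
  have "mdvd M (list_monom (replicate (i - 1) 0 @ [sum_list a + 1, u - 1]))"
    unfolding mdvd_def lM lookup_rep2 using i1 g(7) s_def by auto
  then have "list_monom ((replicate (i - 1) 0 @ [sum_list a + 1]) @ [u - 1]) \<in> G"
    using up[OF MG] monom_in_list_monom i by simp
  then have "fval G (replicate (i - 1) 0 @ [sum_list a + 1]) \<le> enat (u - 1)"
    using fval_le i by simp
  then have "fval G (replicate (i - 1) 0 @ [sum_list a + 1]) + 1 \<le> enat u"
    using g(2) u_def by (intro enat_aux1) auto
  also have "\<dots> \<le> fval G a" using enat g(3) u_def by simp
  finally show ?thesis .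
qed

lemma AR_C2:
  assumes AR: "almost_revlex n G" and i: "1 \<le> i" "i < n" and a: "a \<in> Jset G i" and b: "b \<in> Jset G i"
    and sab: "sum_list a = sum_list b" and lt: "drl_less (list_monom a) (list_monom b)"
  shows "fval G b \<le> fval G a"
proof (cases "fval G a")
  case infinity then show ?thesis by simp
next
  case (enat t)
  have la: "length a = i" and na: "list_monom a \<notin> G" using a Jset_iff i by auto
  have lb: "length b = i" using b Jset_iff i by auto
  have at: "list_monom (a @ [t]) \<in> G" using fval_le[of a t] la i enat by simp
  obtain g where g: "min_gen G g" "1 \<le> Poly_Mapping.lookup g i" "Poly_Mapping.lookup g i \<le> t"
    "\<And>j. j < i \<Longrightarrow> Poly_Mapping.lookup g j \<le> a ! j"
    "\<And>j. j > i \<Longrightarrow> Poly_Mapping.lookup g j = 0"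
    "mdeg g = (\<Sum>j<i. Poly_Mapping.lookup g j) + Poly_Mapping.lookup g i"
    "(\<Sum>j<i. Poly_Mapping.lookup g j) \<le> sum_list a"
    by (rule gen_setup[OF i(2) la na at]) (rule that; assumption+)
  define s where "s = (\<Sum>j<i. Poly_Mapping.lookup g j)"
  define u where "u = Poly_Mapping.lookup g i"
  have key: "list_monom (b @ [t]) \<in> G"
  proof (cases "s < sum_list a")
    case True
    then have "s + 1 \<le> sum_list b" using sab by simp
    from sub_list[OF this] obtain c where c0: "length c = length b" "\<forall>j<length b. c ! j \<le> b ! j" "sum_list c = s + 1"
      by blast
    have c: "length c = i" "\<forall>j<i. c ! j \<le> b ! j" "sum_list c = s + 1" using c0 lb by auto
    define M where "M = list_monom (c @ [u - 1])"
    have lM: "Poly_Mapping.lookup M j = (if j < i then c ! j else if j = i then u - 1 else 0)" for j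
      unfolding M_def lookup_app1 using c by simp
    have "mdeg M = s + u" unfolding M_def mdeg_list_monom using g(2) u_def c by simp
    moreover have "mdeg g = s + u" using g(6) s_def u_def by simp
    ultimately have "drl_less g M" unfolding drl_less_def
      using g(2,5) lM u_def by (intro disjI2 conjI exI[of _ i]) auto
    moreover have "monom_in n M" unfolding M_def using i c by (intro monom_in_list_monom) simp
    moreover have "\<forall>M. monom_in n M \<and> mdeg M = mdeg g \<and> drl_less g M \<longrightarrow> M \<in> G"
      using AR g(1) unfolding almost_revlex_def by blast
    ultimately have MG: "M \<in> G" using \<open>mdeg M = s + u\<close> \<open>mdeg g = s + u\<close> by simp
    have "mdvd M (list_monom (b @ [t]))"
      unfolding mdvd_def lM lookup_app1 using c lb g(3) u_def by auto
    then show ?thesis using up[OF MG] monom_in_list_monom i lb by simp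
  next
    case False
    then have seq: "s = sum_list a" using g(7) s_def by simp
    have geq: "Poly_Mapping.lookup g j = a ! j" if "j < i" for j
    proof -
      have "(\<Sum>j<i. a ! j - Poly_Mapping.lookup g j) = (\<Sum>j<i. a ! j) - (\<Sum>j<i. Poly_Mapping.lookup g j)"
        by (rule sum_subtractf_nat) (simp add: g(4))
      also have "(\<Sum>j<i. a ! j) = sum_list a" using la by (simp add: sum_list_sum_nth atLeast0LessThan)
      finally have "(\<Sum>j<i. a ! j - Poly_Mapping.lookup g j) = 0" using seq s_def by simp
      then have "a ! j - Poly_Mapping.lookup g j = 0" using that by simp
      with g(4)[OF that] show ?thesis by simp
    qed
    from lt obtain j where j: "Poly_Mapping.lookup (list_monom a) j > Poly_Mapping.lookup (list_monom b) j"
      "\<forall>l>j. Poly_Mapping.lookup (list_monom a) l = Poly_Mapping.lookup (list_monom b) l"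
      unfolding drl_less_def mdeg_list_monom using sab by auto
    have ji: "j < i" using j(1) la lb by (auto simp: lookup_list_monom split: if_splits)
    define M where "M = list_monom (b @ [u])"
    have lM: "Poly_Mapping.lookup M l = (if l < i then b ! l else if l = i then u else 0)" for l
      unfolding M_def lookup_app1 using lb by simp
    have "mdeg M = s + u" unfolding M_def mdeg_list_monom using seq sab by simp
    moreover have "mdeg g = s + u" using g(6) s_def u_def by simp
    ultimately have mdeq: "mdeg g = mdeg M" by simp
    have eqs: "\<forall>l>j. Poly_Mapping.lookup g l = Poly_Mapping.lookup M l"
    proof (intro allI impI)
      fix l assume lj: "l > j"
      consider (a) "l < i" | (b) "l = i" | (c) "l > i" by linarith
      then show "Poly_Mapping.lookup g l = Poly_Mapping.lookup M l"
      proof cases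
        case a
        have "Poly_Mapping.lookup (list_monom a) l = Poly_Mapping.lookup (list_monom b) l" using j(2) lj by blast
        then show ?thesis using geq[OF a] lM[of l] a la lb by (simp add: lookup_list_monom)
      next
        case b then show ?thesis using lM[of l] u_def by simp
      next
        case c then show ?thesis using g(5)[OF c] lM[of l] by simp
      qed
    qed
    have gt: "Poly_Mapping.lookup g j > Poly_Mapping.lookup M j"
      using j(1) ji geq[OF ji] lM[of j] la lb by (simp add: lookup_list_monom)
    have "drl_less g M" unfolding drl_less_def
      by (intro disjI2 conjI exI[of _ j]) (rule mdeq, rule gt, rule eqs)
    moreover have "monom_in n M" unfolding M_def using i lb by (intro monom_in_list_monom) simp
    moreover have "\<forall>M. monom_in n M \<and> mdeg M = mdeg g \<and> drl_less g M \<longrightarrow> M \<in> G"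
      using AR g(1) unfolding almost_revlex_def by blast
    ultimately have MG: "M \<in> G" using mdeq by simp
    have "mdvd M (list_monom (b @ [t]))"
      unfolding mdvd_def lM lookup_app1 using lb g(3) u_def by auto
    then show ?thesis using up[OF MG] monom_in_list_monom i lb by simp
  qed
  then show ?thesis using fval_le[of b t] lb i enat by simp
qed

end

context upset begin

lemma chain:
  assumes k: "1 \<le> k" "k < n"
    and C1: "\<forall>a\<in>Jset G k. fval G (replicate (k - 1) 0 @ [sum_list a + 1]) + 1 \<le> fval G a"
    and C2: "\<forall>a\<in>Jset G k. \<forall>b\<in>Jset G k. sum_list a = sum_list b \<and>
          drl_less (list_monom a) (list_monom b) \<longrightarrow> fval G b \<le> fval G a"
    and L: "\<And>d dl. list_monom (replicate (k - 1) 0 @ [d]) \<in> G \<Longrightarrow> length dl = k \<Longrightarrow> sum_list dl = d \<Longrightarrow> list_monom dl \<in> G"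
    and al: "length al = k" "list_monom al \<notin> G" "fval G al = enat t"
    and r: "1 \<le> r" "r \<le> t" and dl: "length dl = k" "sum_list dl = sum_list al + r"
  shows "list_monom (dl @ [t - r]) \<in> G"
proof -
  define ga where "ga r = replicate (k - 1) 0 @ [sum_list al + r]" for r
  have lga: "length (ga r) = k" for r unfolding ga_def using k by simp
  have sga: "sum_list (ga r) = sum_list al + r" for r unfolding ga_def by simp
  have kn: "k \<le> n" using k by simp
  have alJ: "al \<in> Jset G k" using Jset_iff[OF k(1) kn] al by simp
  have Q: "r \<le> t \<longrightarrow> list_monom (ga r @ [t - r]) \<in> G" if "1 \<le> r" for r
    using that
  proof (induction r rule: nat_induct_at_least)
    case base
    have "fval G (ga 1) + 1 \<le> enat t" using C1[rule_format, OF alJ] al(3) unfolding ga_def by simp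
    then have "fval G (ga 1) \<le> enat (t - 1)" by (rule enat_aux2)
    then show ?case using fval_le[of "ga 1" "t - 1"] lga k by simp
  next
    case (Suc r)
    show ?case
    proof
      assume rt: "Suc r \<le> t"
      with Suc.IH have Qr: "list_monom (ga r @ [t - r]) \<in> G" by simp
      show "list_monom (ga (Suc r) @ [t - Suc r]) \<in> G"
      proof (cases "list_monom (ga r) \<in> G")
        case True
        have "mdvd (list_monom (ga r)) (list_monom (ga (Suc r) @ [t - Suc r]))"
          by (rule mdvd_list) (auto simp: ga_def nth_append)
        then show ?thesis using up[OF True] monom_in_list_monom lga k by simp
      next
        case False
        then have "ga r \<in> Jset G k" using Jset_iff[OF k(1) kn] lga by simp
        with C1 have "fval G (replicate (k - 1) 0 @ [sum_list (ga r) + 1]) + 1 \<le> fval G (ga r)" by blast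
        moreover have "replicate (k - 1) 0 @ [sum_list (ga r) + 1] = ga (Suc r)" unfolding ga_def sga by simp
        moreover have "fval G (ga r) \<le> enat (t - r)" using fval_le[of "ga r" "t - r"] lga k Qr by simp
        ultimately have "fval G (ga (Suc r)) + 1 \<le> enat (t - r)" by (metis order_trans)
        then have "fval G (ga (Suc r)) \<le> enat (t - r - 1)" by (rule enat_aux2)
        then show ?thesis using fval_le[of "ga (Suc r)" "t - Suc r"] lga k by simp
      qed
    qed
  qed
  have Qr: "list_monom (ga r @ [t - r]) \<in> G" using Q r by simp
  have mon: "monom_in n (list_monom (dl @ [t - r]))" using dl k by (intro monom_in_list_monom) simp
  show ?thesis
  proof (cases "list_monom dl \<in> G")
    case True
    have "mdvd (list_monom dl) (list_monom (dl @ [t - r]))" by (rule mdvd_list) (auto simp: nth_append)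
    then show ?thesis using up[OF True] mon by simp
  next
    case nd: False
    show ?thesis
    proof (cases "list_monom (ga r) \<in> G")
      case True
      then have "list_monom dl \<in> G" using L[of "sum_list al + r" dl] dl unfolding ga_def by simp
      with nd show ?thesis by simp
    next
      case ng: False
      show ?thesis
      proof (cases "dl = ga r")
        case True then show ?thesis using Qr by simp
      next
        case False
        have "drl_less (list_monom (replicate (k - 1) 0 @ [sum_list dl])) (list_monom dl)"
          by (rule revlex_min[OF k(1) dl(1)]) (use False dl in \<open>simp add: ga_def\<close>)
        then have lt: "drl_less (list_monom (ga r)) (list_monom dl)" unfolding ga_def using dl by simp
        have gJ: "ga r \<in> Jset G k" using Jset_iff[OF k(1) kn] lga ng by simp
        have dJ: "dl \<in> Jset G k" using Jset_iff[OF k(1) kn] dl nd by simp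
        have "fval G dl \<le> fval G (ga r)" using C2 gJ dJ lt sga dl by simp
        also have "\<dots> \<le> enat (t - r)" using fval_le[of "ga r" "t - r"] lga k Qr by simp
        finally show ?thesis using fval_le[of dl "t - r"] dl k by simp
      qed
    qed
  qed
qed

end

context upset begin

lemma drl_witness:
  assumes "drl_less m M" "mdeg M = mdeg m"
  obtains j where "Poly_Mapping.lookup m j > Poly_Mapping.lookup M j"
    "\<forall>l>j. Poly_Mapping.lookup m l = Poly_Mapping.lookup M l"
  using assms unfolding drl_less_def by auto

lemma C_AR:
  assumes C: "\<forall>i. 1 \<le> i \<and> i \<le> n - 1 \<longrightarrow>
      (\<forall>a\<in>Jset G i. fval G (replicate (i - 1) 0 @ [sum_list a + 1]) + 1 \<le> fval G a) \<and>
      (\<forall>a\<in>Jset G i. \<forall>b\<in>Jset G i. sum_list a = sum_list b \<and>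
          drl_less (list_monom a) (list_monom b) \<longrightarrow> fval G b \<le> fval G a)"
  shows "almost_revlex n G"
proof -
  have P: "\<forall>m M. min_gen G m \<longrightarrow> (\<forall>j>i. Poly_Mapping.lookup m j = 0) \<longrightarrow> monom_in n M \<longrightarrow>
     mdeg M = mdeg m \<longrightarrow> drl_less m M \<longrightarrow> M \<in> G" for i
  proof (induction i)
    case 0
    show ?case
    proof (intro allI impI)
      fix m M assume m0: "\<forall>j>0. Poly_Mapping.lookup m j = 0" and deq: "mdeg M = mdeg m" and lt: "drl_less m M"
      obtain j where j: "Poly_Mapping.lookup m j > Poly_Mapping.lookup M j"
        "\<forall>l>j. Poly_Mapping.lookup m l = Poly_Mapping.lookup M l" using drl_witness[OF lt deq] by blast
      have "j = 0" using j(1) m0 by (metis gr0I less_nat_zero_code)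
      then have M0: "\<forall>l>0. Poly_Mapping.lookup M l = 0" using j(2) m0 by simp
      have "mdeg m = (\<Sum>l<1. Poly_Mapping.lookup m l)" by (rule mdeg_bound) (use m0 in simp)
      moreover have "mdeg M = (\<Sum>l<1. Poly_Mapping.lookup M l)" by (rule mdeg_bound) (use M0 in simp)
      ultimately show "M \<in> G" using deq j(1) \<open>j = 0\<close> by simp
    qed
  next
    case (Suc i)
    show ?case
    proof (intro allI impI)
      fix m M assume mg: "min_gen G m" and m0: "\<forall>j>Suc i. Poly_Mapping.lookup m j = 0"
        and Mn: "monom_in n M" and deq: "mdeg M = mdeg m" and lt: "drl_less m M"
      define k where "k = Suc i"
      show "M \<in> G"
      proof (cases "Poly_Mapping.lookup m k = 0")
        case True
        then have "\<forall>j>i. Poly_Mapping.lookup m j = 0" using m0 unfolding k_def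
          by (metis Suc_lessI)
        then show ?thesis using Suc.IH mg Mn deq lt by blast
      next
        case False
        define t where "t = Poly_Mapping.lookup m k"
        have t1: "1 \<le> t" using False t_def by simp
        have mG: "m \<in> G" using mg unfolding min_gen_def by simp
        have "k \<in> Poly_Mapping.keys m" using False by (simp add: in_keys_iff)
        then have kn: "k < n" using inn[OF mG] unfolding monom_in_def by blast
        define al where "al = map (Poly_Mapping.lookup m) [0..<k]"
        have lal: "length al = k" unfolding al_def by simp
        have mal: "m = list_monom (al @ [t])"
        proof (rule poly_mapping_eqI)
          fix x
          have "\<forall>j>k. Poly_Mapping.lookup m j = 0" using m0 k_def by simp
          then show "Poly_Mapping.lookup m x = Poly_Mapping.lookup (list_monom (al @ [t])) x"
            unfolding lookup_app1 lal by (auto simp: al_def t_def)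
        qed
        obtain j where j: "Poly_Mapping.lookup m j > Poly_Mapping.lookup M j"
          "\<forall>l>j. Poly_Mapping.lookup m l = Poly_Mapping.lookup M l" using drl_witness[OF lt deq] by blast
        have jk: "j \<le> k" using j(1) m0 unfolding k_def by (metis less_nat_zero_code not_le)
        have M0: "\<forall>l>k. Poly_Mapping.lookup M l = 0" using j(2) m0 jk unfolding k_def by auto
        define s where "s = Poly_Mapping.lookup M k"
        define be where "be = map (Poly_Mapping.lookup M) [0..<k]"
        have lbe: "length be = k" unfolding be_def by simp
        have Mbe: "M = list_monom (be @ [s])"
          by (rule poly_mapping_eqI) (use M0 in \<open>auto simp: lookup_app1 be_def s_def\<close>)
        have nal: "list_monom al \<notin> G"
        proof
          assume h: "list_monom al \<in> G"
          have "mdvd (list_monom al) m" unfolding mal by (rule mdvd_list) (auto simp: nth_append)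
          with h mg have "list_monom al = m" unfolding min_gen_def by blast
          then have "Poly_Mapping.lookup (list_monom al) k = t" using t_def by simp
          with t1 lal show False by (simp add: lookup_list_monom)
        qed
        have nal1: "list_monom (al @ [t - 1]) \<notin> G"
        proof
          assume h: "list_monom (al @ [t - 1]) \<in> G"
          have "mdvd (list_monom (al @ [t - 1])) m" unfolding mal by (rule mdvd_list) (auto simp: nth_append)
          with h mg have "list_monom (al @ [t - 1]) = m" unfolding min_gen_def by blast
          then have "Poly_Mapping.lookup (list_monom (al @ [t - 1])) k = t" using t_def by simp
          with t1 lal show False by (simp add: lookup_app1)
        qed
        have fal: "fval G al = enat t"
        proof -
          have a1: "fval G al \<le> enat t" using fval_le[of al t] lal kn mG mal by simp
          have a2: "\<not> fval G al \<le> enat (t - 1)" using fval_le[of al "t - 1"] lal kn nal1 by simp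
          show ?thesis using a1 a2 by (cases "fval G al") auto
        qed
        have k1: "1 \<le> k" "k \<le> n" using kn unfolding k_def by auto
        have alJ: "al \<in> Jset G k" using Jset_iff[OF k1] lal nal by simp
        have Ck: "1 \<le> k \<and> k \<le> n - 1" using kn k1 by simp
        have C1: "\<forall>a\<in>Jset G k. fval G (replicate (k - 1) 0 @ [sum_list a + 1]) + 1 \<le> fval G a"
          using C Ck by blast
        have C2: "\<forall>a\<in>Jset G k. \<forall>b\<in>Jset G k. sum_list a = sum_list b \<and>
          drl_less (list_monom a) (list_monom b) \<longrightarrow> fval G b \<le> fval G a"
          using C Ck by blast
        have dm: "mdeg m = sum_list al + t" unfolding mal mdeg_list_monom by simp
        have dM: "mdeg M = sum_list be + s" unfolding Mbe mdeg_list_monom by simp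
        show ?thesis
        proof (cases "j < k")
          case True
          have st: "s = t" using j(2) True unfolding s_def t_def by simp
          have sab: "sum_list al = sum_list be" using dm dM deq st by simp
          have "drl_less (list_monom al) (list_monom be)" unfolding drl_less_def
          proof (intro disjI2 conjI exI[of _ j])
            show "mdeg (list_monom al) = mdeg (list_monom be)" unfolding mdeg_list_monom by (rule sab)
            show "Poly_Mapping.lookup (list_monom al) j > Poly_Mapping.lookup (list_monom be) j"
              using j(1) True lal lbe by (simp add: lookup_list_monom al_def be_def)
            show "\<forall>l>j. Poly_Mapping.lookup (list_monom al) l = Poly_Mapping.lookup (list_monom be) l"
              using j(2) lal lbe by (auto simp: lookup_list_monom al_def be_def)
          qed
          note lt2 = this
          show ?thesis
          proof (cases "list_monom be \<in> G")
            case True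
            have "mdvd (list_monom be) M" unfolding Mbe by (rule mdvd_list) (auto simp: nth_append)
            then show ?thesis using up[OF True] Mn by simp
          next
            case False
            then have beJ: "be \<in> Jset G k" using Jset_iff[OF k1] lbe by simp
            have "fval G be \<le> enat t" using C2 alJ beJ sab lt2 fal by auto
            then show ?thesis using fval_le[of be t] lbe kn Mbe st by simp
          qed
        next
          case False
          then have jk': "j = k" using jk by simp
          then have st: "s < t" using j(1) unfolding s_def t_def by simp
          have L: "list_monom dl \<in> G"
            if dG: "list_monom (replicate (k - 1) 0 @ [d]) \<in> G" and ldl: "length dl = k" and sdl: "sum_list dl = d" for d dl
          proof -
            have ki: "k - 1 = i" unfolding k_def by simp
            obtain g where g: "min_gen G g" "mdvd g (list_monom (replicate i 0 @ [d]))"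
              using mingen_exists[OF dG[unfolded ki]] by blast
            define e where "e = Poly_Mapping.lookup g i"
            have gl: "Poly_Mapping.lookup g l \<le> (if l = i then d else 0)" for l
              using g(2) unfolding mdvd_def lookup_rep1 by metis
            have ed: "e \<le> d" using gl[of i] e_def by simp
            have geq: "g = list_monom (replicate i 0 @ [e])"
            proof (rule poly_mapping_eqI)
              fix x show "Poly_Mapping.lookup g x = Poly_Mapping.lookup (list_monom (replicate i 0 @ [e])) x"
                using gl[of x] unfolding lookup_rep1 e_def by (cases "x = i") auto
            qed
            from sub_list[of e dl] ed sdl obtain dl' where dl': "length dl' = length dl"
              "\<forall>j<length dl. dl' ! j \<le> dl ! j" "sum_list dl' = e" by auto
            have "list_monom dl' \<in> G"
            proof (cases "dl' = replicate i 0 @ [e]")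
              case True then show ?thesis using g(1) geq unfolding min_gen_def by simp
            next
              case False
              have "drl_less (list_monom (replicate (k - 1) 0 @ [sum_list dl'])) (list_monom dl')"
                by (rule revlex_min[OF k1(1)]) (use False dl' ldl ki in simp_all)
              then have lt': "drl_less g (list_monom dl')" using geq dl' ki by simp
              have g0: "\<forall>j>i. Poly_Mapping.lookup g j = 0"
              proof (intro allI impI)
                fix j assume "j > i" then show "Poly_Mapping.lookup g j = 0" using gl[of j] by simp
              qed
              have mon': "monom_in n (list_monom dl')" using dl' ldl k1 by (intro monom_in_list_monom) simp
              have "mdeg (list_monom dl') = mdeg g" using geq dl' by (simp add: mdeg_list_monom)
              then show ?thesis using Suc.IH g(1) g0 mon' lt' by blast
            qed
            moreover have "mdvd (list_monom dl') (list_monom dl)" by (rule mdvd_list) (use dl' in simp_all)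
            ultimately show ?thesis using up monom_in_list_monom ldl k1 by simp
          qed
          have "list_monom (be @ [t - (t - s)]) \<in> G"
            by (rule chain[OF _ kn C1 C2 L lal nal fal]) (use k1 st lbe dm dM deq in simp_all)
          then show ?thesis using Mbe st by simp
        qed
      qed
    qed
  qed
  show ?thesis unfolding almost_revlex_def
  proof (intro allI impI)
    fix m M assume mg: "min_gen G m" and h: "monom_in n M \<and> mdeg M = mdeg m \<and> drl_less m M"
    have mG: "m \<in> G" using mg unfolding min_gen_def by simp
    have "\<forall>j>n. Poly_Mapping.lookup m j = 0" using inn[OF mG] unfolding monom_in_def by (auto simp: in_keys_iff)
    then show "M \<in> G" using P[of n] mg h by blast
  qed
qed

end

lemma drl_irrefl: "\<not> drl_less m m"
  unfolding drl_less_def by simp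

lemma drl_mdeg: "drl_less a b \<Longrightarrow> mdeg a \<le> mdeg b"
  unfolding drl_less_def by auto

lemma drl_trans: assumes ab: "drl_less a b" and bc: "drl_less b c" shows "drl_less a c"
proof (cases "mdeg a < mdeg c")
  case True then show ?thesis unfolding drl_less_def by simp
next
  case False
  with drl_mdeg[OF ab] drl_mdeg[OF bc] have e1: "mdeg a = mdeg b" and e2: "mdeg b = mdeg c" by auto
  from ab e1 obtain j1 where j1: "Poly_Mapping.lookup a j1 > Poly_Mapping.lookup b j1"
    "\<forall>l>j1. Poly_Mapping.lookup a l = Poly_Mapping.lookup b l" unfolding drl_less_def by auto
  from bc e2 obtain j2 where j2: "Poly_Mapping.lookup b j2 > Poly_Mapping.lookup c j2"
    "\<forall>l>j2. Poly_Mapping.lookup b l = Poly_Mapping.lookup c l" unfolding drl_less_def by auto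
  show ?thesis unfolding drl_less_def
  proof (intro disjI2 conjI exI[of _ "max j1 j2"])
    show "mdeg a = mdeg c" using e1 e2 by simp
    show "Poly_Mapping.lookup a (max j1 j2) > Poly_Mapping.lookup c (max j1 j2)"
    proof (cases j1 j2 rule: linorder_cases)
      case less then show ?thesis using j1 j2 by (simp add: max_def)
    next
      case equal then show ?thesis using j1 j2 by simp
    next
      case greater then show ?thesis using j1 j2 by (simp add: max_def)
    qed
    show "\<forall>l>max j1 j2. Poly_Mapping.lookup a l = Poly_Mapping.lookup c l" using j1(2) j2(2) by simp
  qed
qed

lemma drl_total: assumes "m \<noteq> m'" shows "drl_less m m' \<or> drl_less m' m"
proof (cases "mdeg m = mdeg m'")
  case False then show ?thesis unfolding drl_less_def by linarith
next
  case True
  define D where "D = {j. Poly_Mapping.lookup m j \<noteq> Poly_Mapping.lookup m' j}"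
  have "D \<subseteq> Poly_Mapping.keys m \<union> Poly_Mapping.keys m'" unfolding D_def by (auto simp: in_keys_iff)
  then have fD: "finite D" by (rule finite_subset) simp
  have "D \<noteq> {}"
  proof
    assume "D = {}"
    then have "\<And>x. Poly_Mapping.lookup m x = Poly_Mapping.lookup m' x" unfolding D_def by blast
    then have "m = m'" by (rule poly_mapping_eqI)
    with assms show False by simp
  qed
  define j where "j = Max D"
  have jD: "j \<in> D" unfolding j_def using fD \<open>D \<noteq> {}\<close> by simp
  have above: "\<forall>l>j. Poly_Mapping.lookup m l = Poly_Mapping.lookup m' l"
  proof (intro allI impI)
    fix l assume "l > j"
    then have "l \<notin> D" unfolding j_def using fD Max_ge not_le by blast
    then show "Poly_Mapping.lookup m l = Poly_Mapping.lookup m' l" unfolding D_def by simp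
  qed
  have above': "\<forall>l>j. Poly_Mapping.lookup m' l = Poly_Mapping.lookup m l" using above by simp
  from jD have "Poly_Mapping.lookup m j > Poly_Mapping.lookup m' j \<or> Poly_Mapping.lookup m' j > Poly_Mapping.lookup m j"
    unfolding D_def by auto
  then show ?thesis
  proof
    assume "Poly_Mapping.lookup m j > Poly_Mapping.lookup m' j"
    then have "drl_less m m'" unfolding drl_less_def using True above by blast
    then show ?thesis ..
  next
    assume "Poly_Mapping.lookup m' j > Poly_Mapping.lookup m j"
    then have "drl_less m' m" unfolding drl_less_def using True above' by auto
    then show ?thesis ..
  qed
qed

lemma drl_shift: assumes "drl_less m m'" shows "drl_less (v + m) (v + m')"
  using assms unfolding drl_less_def mdeg_add by (auto simp: lookup_add)

lemma exists_max: "finite S \<Longrightarrow> S \<noteq> {} \<Longrightarrow> \<exists>m\<in>S. \<forall>m'\<in>S. m' \<noteq> m \<longrightarrow> drl_less m' m"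
proof (induction S rule: finite_ne_induct)
  case (singleton x) then show ?case by simp
next
  case (insert x S)
  then obtain m where m: "m \<in> S" "\<forall>m'\<in>S. m' \<noteq> m \<longrightarrow> drl_less m' m" by blast
  have xm: "x \<noteq> m" using m(1) insert.hyps by blast
  show ?case
  proof (cases "drl_less x m")
    case True then show ?thesis using m by auto
  next
    case False
    then have mx: "drl_less m x" using drl_total[OF xm] by simp
    have "\<forall>m'\<in>insert x S. m' \<noteq> x \<longrightarrow> drl_less m' x"
    proof (intro ballI impI)
      fix m' assume "m' \<in> insert x S" "m' \<noteq> x"
      then have "m' \<in> S" by simp
      show "drl_less m' x"
      proof (cases "m' = m")
        case True then show ?thesis using mx by simp
      next
        case False then show ?thesis using m(2) \<open>m' \<in> S\<close> mx drl_trans by blast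
      qed
    qed
    then show ?thesis by blast
  qed
qed

lemma lead_unique:
  assumes "m \<in> Poly_Mapping.keys F" "\<forall>m'\<in>Poly_Mapping.keys F. m' \<noteq> m \<longrightarrow> drl_less m' m"
  shows "lead_monom F = m"
  unfolding lead_monom_def
proof (rule the_equality)
  show "m \<in> Poly_Mapping.keys F \<and> (\<forall>m'\<in>Poly_Mapping.keys F. m' \<noteq> m \<longrightarrow> drl_less m' m)" using assms by simp
next
  fix x assume x: "x \<in> Poly_Mapping.keys F \<and> (\<forall>m'\<in>Poly_Mapping.keys F. m' \<noteq> x \<longrightarrow> drl_less m' x)"
  show "x = m"
  proof (rule ccontr)
    assume "x \<noteq> m"
    then have "drl_less x m" "drl_less m x" using x assms by auto
    then show False using drl_trans drl_irrefl by blast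
  qed
qed

lemma lead_char:
  assumes "F \<noteq> 0"
  shows "lead_monom F \<in> Poly_Mapping.keys F \<and> (\<forall>m'\<in>Poly_Mapping.keys F. m' \<noteq> lead_monom F \<longrightarrow> drl_less m' (lead_monom F))"
proof -
  have "Poly_Mapping.keys F \<noteq> {}" using assms by simp
  then obtain m where m: "m \<in> Poly_Mapping.keys F" "\<forall>m'\<in>Poly_Mapping.keys F. m' \<noteq> m \<longrightarrow> drl_less m' m"
    using exists_max[of "Poly_Mapping.keys F"] by auto
  with lead_unique[OF m] show ?thesis by simp
qed

lemma poly_repr: "f = (\<Sum>m\<in>Poly_Mapping.keys f. Poly_Mapping.single m (Poly_Mapping.lookup f m))"
proof (rule poly_mapping_eqI)
  fix k
  show "Poly_Mapping.lookup f k = Poly_Mapping.lookup (\<Sum>m\<in>Poly_Mapping.keys f. Poly_Mapping.single m (Poly_Mapping.lookup f m)) k"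
    by (simp add: lookup_sum lookup_single when_def in_keys_iff)
qed

lemma lead_shift:
  fixes F :: "'k::field mpoly"
  assumes "F \<noteq> 0"
  shows "Poly_Mapping.single v 1 * F \<noteq> 0 \<and> lead_monom (Poly_Mapping.single v 1 * F) = v + lead_monom F"
proof -
  let ?P = "Poly_Mapping.single v 1 * F"
  have lk: "Poly_Mapping.lookup ?P (v + m0) = Poly_Mapping.lookup F m0" for m0
  proof -
    have "?P = (\<Sum>m\<in>Poly_Mapping.keys F. Poly_Mapping.single v 1 * Poly_Mapping.single m (Poly_Mapping.lookup F m))"
      by (subst poly_repr[of F]) (simp add: sum_distrib_left)
    also have "\<dots> = (\<Sum>m\<in>Poly_Mapping.keys F. Poly_Mapping.single (v + m) (Poly_Mapping.lookup F m))"
      by (simp add: mult_single)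
    finally have "Poly_Mapping.lookup ?P (v + m0) = (\<Sum>m\<in>Poly_Mapping.keys F. if m = m0 then Poly_Mapping.lookup F m else 0)"
      by (simp add: lookup_sum lookup_single when_def eq_commute)
    also have "\<dots> = Poly_Mapping.lookup F m0" by (simp add: in_keys_iff)
    finally show ?thesis .
  qed
  have keysP: "Poly_Mapping.keys ?P \<subseteq> (\<lambda>m. v + m) ` Poly_Mapping.keys F"
    using keys_mult[of "Poly_Mapping.single v 1" F] by auto
  have lmF: "lead_monom F \<in> Poly_Mapping.keys F" and lmF2: "\<forall>m'\<in>Poly_Mapping.keys F. m' \<noteq> lead_monom F \<longrightarrow> drl_less m' (lead_monom F)"
    using lead_char[OF assms] by auto
  have inP: "v + lead_monom F \<in> Poly_Mapping.keys ?P" using lk lmF by (simp add: in_keys_iff)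
  then have "?P \<noteq> 0" by auto
  moreover have "lead_monom ?P = v + lead_monom F"
  proof (rule lead_unique[OF inP], intro ballI impI)
    fix m'' assume "m'' \<in> Poly_Mapping.keys ?P" "m'' \<noteq> v + lead_monom F"
    then obtain m' where m': "m' \<in> Poly_Mapping.keys F" "m'' = v + m'" using keysP by auto
    then have "m' \<noteq> lead_monom F" using \<open>m'' \<noteq> v + lead_monom F\<close> by auto
    then have "drl_less m' (lead_monom F)" using lmF2 m' by blast
    then show "drl_less m'' (v + lead_monom F)" using m' drl_shift by simp
  qed
  ultimately show ?thesis by simp
qed

definition pm :: "nat \<Rightarrow> (nat \<Rightarrow> nat \<Rightarrow> 'k::field) \<Rightarrow> monom \<Rightarrow> 'k mpoly" where
  "pm n g m = (\<Prod>j\<in>Poly_Mapping.keys m. lin_form n g j ^ Poly_Mapping.lookup m j)"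

lemma pm_superset: "finite S \<Longrightarrow> Poly_Mapping.keys m \<subseteq> S \<Longrightarrow> pm n g m = (\<Prod>j\<in>S. lin_form n g j ^ Poly_Mapping.lookup m j)"
  unfolding pm_def by (rule prod.mono_neutral_left) (auto simp: in_keys_iff)

lemma pm_add: "pm n g (a + b) = pm n g a * pm n g b"
proof -
  let ?S = "Poly_Mapping.keys a \<union> Poly_Mapping.keys b"
  have "pm n g (a + b) = (\<Prod>j\<in>?S. lin_form n g j ^ Poly_Mapping.lookup (a + b) j)"
    apply (rule pm_superset) using keys_add[of a b] by auto
  also have "\<dots> = (\<Prod>j\<in>?S. lin_form n g j ^ Poly_Mapping.lookup a j * lin_form n g j ^ Poly_Mapping.lookup b j)"
    by (simp add: lookup_add power_add)
  also have "\<dots> = (\<Prod>j\<in>?S. lin_form n g j ^ Poly_Mapping.lookup a j) * (\<Prod>j\<in>?S. lin_form n g j ^ Poly_Mapping.lookup b j)"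
    by (rule prod.distrib)
  also have "\<dots> = pm n g a * pm n g b"
    by (simp add: pm_superset[symmetric])
  finally show ?thesis .
qed

lemma const_add: "const (a + b) = const a + const b"
  unfolding const_def by (simp add: single_add)

lemma const_mult: "const (a * b) = const a * const b"
  unfolding const_def by (simp add: mult_single)

lemma const_0 [simp]: "const 0 = 0" unfolding const_def by simp

lemma act_pm: "act n g f = (\<Sum>m\<in>Poly_Mapping.keys f. const (Poly_Mapping.lookup f m) * pm n g m)"
  unfolding act_def pm_def by simp

lemma act_superset: "finite S \<Longrightarrow> Poly_Mapping.keys f \<subseteq> S \<Longrightarrow> act n g f = (\<Sum>m\<in>S. const (Poly_Mapping.lookup f m) * pm n g m)"
  unfolding act_pm by (rule sum.mono_neutral_left) (auto simp: in_keys_iff)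

lemma act_zero [simp]: "act n g 0 = 0"
  unfolding act_pm by simp

lemma act_add: "act n g (f + h) = act n g f + act n g h"
proof -
  let ?S = "Poly_Mapping.keys f \<union> Poly_Mapping.keys h"
  have "act n g (f + h) = (\<Sum>m\<in>?S. const (Poly_Mapping.lookup (f + h) m) * pm n g m)"
    apply (rule act_superset) using keys_add[of f h] by auto
  also have "\<dots> = (\<Sum>m\<in>?S. const (Poly_Mapping.lookup f m) * pm n g m + const (Poly_Mapping.lookup h m) * pm n g m)"
    by (simp add: lookup_add const_add distrib_right)
  also have "\<dots> = act n g f + act n g h"
    by (simp add: sum.distrib act_superset[symmetric])
  finally show ?thesis .
qed

lemma act_sum: "act n g (\<Sum>x\<in>A. F x) = (\<Sum>x\<in>A. act n g (F x))"
  by (induction A rule: infinite_finite_induct) (simp_all add: act_add)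

lemma act_single: "act n g (Poly_Mapping.single m c) = const c * pm n g m"
proof (cases "c = 0")
  case True then show ?thesis by simp
next
  case False then show ?thesis unfolding act_pm by simp
qed

lemma act_single_mult: "act n g (Poly_Mapping.single a b * Poly_Mapping.single c d) =
  act n g (Poly_Mapping.single a b) * act n g (Poly_Mapping.single c d)"
  by (simp add: mult_single act_single pm_add const_mult ac_simps)

lemma act_mult: "act n g (p * q) = act n g p * act n g q"
proof -
  let ?A = "Poly_Mapping.keys p" and ?C = "Poly_Mapping.keys q"
  let ?sp = "\<lambda>a. Poly_Mapping.single a (Poly_Mapping.lookup p a)"
  let ?sq = "\<lambda>c. Poly_Mapping.single c (Poly_Mapping.lookup q c)"
  have "p * q = (\<Sum>a\<in>?A. ?sp a) * (\<Sum>c\<in>?C. ?sq c)" using poly_repr[of p] poly_repr[of q] by simp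
  also have "\<dots> = (\<Sum>a\<in>?A. \<Sum>c\<in>?C. ?sp a * ?sq c)" by (rule sum_product)
  finally have "act n g (p * q) = (\<Sum>a\<in>?A. \<Sum>c\<in>?C. act n g (?sp a * ?sq c))" by (simp add: act_sum)
  also have "\<dots> = (\<Sum>a\<in>?A. \<Sum>c\<in>?C. act n g (?sp a) * act n g (?sq c))" by (simp add: act_single_mult)
  also have "\<dots> = (\<Sum>a\<in>?A. act n g (?sp a)) * (\<Sum>c\<in>?C. act n g (?sq c))" by (rule sum_product[symmetric])
  also have "\<dots> = act n g p * act n g q" by (simp add: act_sum[symmetric] poly_repr[symmetric])
  finally show ?thesis .
qed

lemma pm_var: "pm n g (Poly_Mapping.single i (Suc 0)) = lin_form n g i"
  unfolding pm_def by simp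

lemma const_1: "const 1 = 1" unfolding const_def by simp

lemma single_sum: "Poly_Mapping.single k (\<Sum>x\<in>A. f x) = (\<Sum>x\<in>A. Poly_Mapping.single k (f x))"
  by (induction A rule: infinite_finite_induct) (simp_all add: single_add)

lemma act_lin:
  assumes inv: "\<forall>i<n. \<forall>j<n. (\<Sum>l<n. g i l * h l j) = (if i = j then 1 else 0)" and k: "k < n"
  shows "act n g (lin_form n h k) = Poly_Mapping.single (Poly_Mapping.single k 1) 1"
proof -
  have "act n g (lin_form n h k) = (\<Sum>i<n. const (h i k) * lin_form n g i)"
    unfolding lin_form_def[of n h] by (simp add: act_sum act_single pm_var)
  also have "\<dots> = (\<Sum>i<n. \<Sum>l<n. Poly_Mapping.single (Poly_Mapping.single l 1) (h i k * g l i))"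
    unfolding lin_form_def const_def by (simp add: sum_distrib_left mult_single)
  also have "\<dots> = (\<Sum>l<n. \<Sum>i<n. Poly_Mapping.single (Poly_Mapping.single l 1) (g l i * h i k))"
    by (subst sum.swap) (simp add: mult.commute)
  also have "\<dots> = (\<Sum>l<n. Poly_Mapping.single (Poly_Mapping.single l 1) (\<Sum>i<n. g l i * h i k))"
    by (simp add: single_sum)
  also have "\<dots> = (\<Sum>l<n. Poly_Mapping.single (Poly_Mapping.single l 1) (if l = k then 1 else 0))"
    using inv k by simp
  also have "\<dots> = Poly_Mapping.single (Poly_Mapping.single k 1) 1"
  proof -
    have "(\<Sum>l<n. Poly_Mapping.single (Poly_Mapping.single l 1) (if l = k then 1 else 0)) =
       (\<Sum>l<n. if l = k then Poly_Mapping.single (Poly_Mapping.single k (1::nat)) (1::'a) else 0)"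
      by (rule sum.cong) auto
    also have "\<dots> = Poly_Mapping.single (Poly_Mapping.single k 1) 1" using k by simp
    finally show ?thesis .
  qed
  finally show ?thesis .
qed

lemma monom_in_add: "monom_in n a \<Longrightarrow> monom_in n b \<Longrightarrow> monom_in n (a + b)"
  unfolding monom_in_def using keys_add[of a b] by blast

lemma pr_add: "f \<in> poly_ring n \<Longrightarrow> h \<in> poly_ring n \<Longrightarrow> f + h \<in> poly_ring n"
  unfolding poly_ring_def using keys_add[of f h] by blast

lemma pr_zero: "0 \<in> poly_ring n" unfolding poly_ring_def by simp

lemma pr_mult: "f \<in> poly_ring n \<Longrightarrow> h \<in> poly_ring n \<Longrightarrow> f * h \<in> poly_ring n"
  unfolding poly_ring_def using keys_mult[of f h] monom_in_add by blast

lemma pr_one: "(1::'k::field mpoly) \<in> poly_ring n"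
  unfolding poly_ring_def monom_in_def by simp

lemma pr_sum: "(\<And>x. x \<in> A \<Longrightarrow> F x \<in> poly_ring n) \<Longrightarrow> (\<Sum>x\<in>A. F x) \<in> poly_ring n"
  by (induction A rule: infinite_finite_induct) (auto intro: pr_add pr_zero)

lemma pr_prod: "(\<And>x. x \<in> A \<Longrightarrow> F x \<in> poly_ring n) \<Longrightarrow> (\<Prod>x\<in>A. F x) \<in> poly_ring n"
  by (induction A rule: infinite_finite_induct) (auto intro: pr_mult pr_one)

lemma pr_power: "f \<in> poly_ring n \<Longrightarrow> f ^ k \<in> poly_ring n"
  by (induction k) (auto intro: pr_mult pr_one)

lemma pr_const: "const c \<in> poly_ring n"
  unfolding poly_ring_def const_def monom_in_def by simp

lemma pr_var: "i < n \<Longrightarrow> Poly_Mapping.single (Poly_Mapping.single i 1) c \<in> poly_ring n"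
  unfolding poly_ring_def monom_in_def by simp

lemma pr_lin: "lin_form n g j \<in> poly_ring n"
  unfolding lin_form_def by (rule pr_sum) (simp add: pr_var[unfolded One_nat_def])

lemma pr_act: "act n g f \<in> poly_ring n"
  unfolding act_def by (intro pr_sum pr_mult pr_const pr_prod pr_power pr_lin)

lemma gin_upset:
  fixes I :: "('k::field) mpoly set"
  assumes hom: "homogeneous_ideal n I" and gin: "is_gin n I G"
  shows "upset n G"
proof -
  have idl: "is_ideal n I" using hom unfolding homogeneous_ideal_def by simp
  from gin obtain P where P: "\<exists>g. invertible_n n g \<and> eval_mat n P g \<noteq> 0"
    "\<forall>g. invertible_n n g \<and> eval_mat n P g \<noteq> 0 \<longrightarrow> in_ideal (act n g ` I) = G"
    unfolding is_gin_def by blast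
  from P(1) obtain g where g: "invertible_n n g" "eval_mat n P g \<noteq> 0" by blast
  have inv: "invertible_n n g" by (rule g(1))
  have GG: "in_ideal (act n g ` I) = G" by (rule P(2)[rule_format, OF conjI[OF g(1) g(2)]])
  from inv obtain h where hh: "(\<forall>i<n. \<forall>j<n. (\<Sum>l<n. g i l * h l j) = (if i = j then 1 else 0)) \<and>
      (\<forall>i<n. \<forall>j<n. (\<Sum>l<n. h i l * g l j) = (if i = j then 1 else 0))"
    unfolding invertible_n_def by (rule exE)
  have hinv: "\<forall>i<n. \<forall>j<n. (\<Sum>l<n. g i l * h l j) = (if i = j then 1 else 0)" using hh by (rule conjunct1)
  have memG: "m \<in> G \<longleftrightarrow> (\<exists>f\<in>I. act n g f \<noteq> 0 \<and> m = lead_monom (act n g f))" for m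
  proof
    assume "m \<in> G"
    then obtain F where F: "m = lead_monom F" "F \<in> act n g ` I" "F \<noteq> 0" unfolding GG[symmetric] in_ideal_def by blast
    from F(2) obtain f where f: "f \<in> I" "F = act n g f" by (rule imageE)
    show "\<exists>f\<in>I. act n g f \<noteq> 0 \<and> m = lead_monom (act n g f)"
      using F(1,3) f by (intro bexI[of _ f]) simp_all
  next
    assume "\<exists>f\<in>I. act n g f \<noteq> 0 \<and> m = lead_monom (act n g f)"
    then obtain f where f: "f \<in> I" "act n g f \<noteq> 0" "m = lead_monom (act n g f)" by blast
    have "act n g f \<in> act n g ` I" using f(1) by (rule imageI)
    then have "m \<in> {lead_monom F | F. F \<in> act n g ` I \<and> F \<noteq> 0}" using f(2,3) by blast
    then show "m \<in> G" unfolding GG[symmetric] in_ideal_def .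
  qed
  have inn: "monom_in n m" if mG0: "m \<in> G" for m
  proof -
    obtain f where f: "f \<in> I" "act n g f \<noteq> 0" "m = lead_monom (act n g f)" using memG[THEN iffD1, OF mG0] by blast
    have "m \<in> Poly_Mapping.keys (act n g f)" using lead_char[OF f(2)] f(3) by simp
    moreover have "\<forall>m\<in>Poly_Mapping.keys (act n g f). monom_in n m" using pr_act[of n g f] unfolding poly_ring_def by simp
    ultimately show ?thesis by blast
  qed
  have step: "Poly_Mapping.single k 1 + m \<in> G" if mG0: "m \<in> G" and kn0: "k < n" for m k
  proof -
    obtain f where f: "f \<in> I" "act n g f \<noteq> 0" "m = lead_monom (act n g f)" using memG[THEN iffD1, OF mG0] by blast
    have "lin_form n h k * f \<in> I" using idl f(1) pr_lin unfolding is_ideal_def by blast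
    moreover have "act n g (lin_form n h k * f) = Poly_Mapping.single (Poly_Mapping.single k 1) 1 * act n g f"
      by (simp add: act_mult act_lin[OF hinv kn0])
    moreover note ls = lead_shift[OF f(2), of "Poly_Mapping.single k 1"]
    ultimately have "\<exists>f'\<in>I. act n g f' \<noteq> 0 \<and> Poly_Mapping.single k 1 + m = lead_monom (act n g f')"
      using f(3) by (intro bexI[of _ "lin_form n h k * f"]) simp_all
    then show ?thesis by (rule memG[THEN iffD2])
  qed
  have upd: "\<forall>u. mdeg u = d \<longrightarrow> monom_in n u \<longrightarrow> (\<forall>m\<in>G. u + m \<in> G)" for d
  proof (induction d)
    case 0
    show ?case
    proof (intro allI impI ballI)
      fix u m assume "mdeg u = 0" "m \<in> G"
      moreover have "mdvd 0 u" unfolding mdvd_def by simp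
      moreover have "mdeg (0::monom) = 0" unfolding mdeg_def by simp
      ultimately have "u = 0" using mdvd_mdeg_eq[of 0 u] by simp
      then show "u + m \<in> G" using \<open>m \<in> G\<close> by simp
    qed
  next
    case (Suc d)
    show ?case
    proof (intro allI impI ballI)
      fix u m assume du: "mdeg u = Suc d" and un: "monom_in n u" and mG: "m \<in> G"
      have "u \<noteq> 0" using du unfolding mdeg_def by auto
      then have "Poly_Mapping.keys u \<noteq> {}" by simp
      then obtain k where k: "k \<in> Poly_Mapping.keys u" by blast
      then have kn: "k < n" using un unfolding monom_in_def by auto
      define u' where "u' = u - Poly_Mapping.single k 1"
      have uu: "u = Poly_Mapping.single k 1 + u'"
      proof (rule poly_mapping_eqI)
        fix x show "Poly_Mapping.lookup u x = Poly_Mapping.lookup (Poly_Mapping.single k 1 + u') x"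
          using k unfolding u'_def by (auto simp: lookup_add lookup_minus lookup_single when_def in_keys_iff)
      qed
      have "mdeg u = 1 + mdeg u'" unfolding uu mdeg_add by (simp add: mdeg_def)
      then have du': "mdeg u' = d" using du by simp
      have "Poly_Mapping.keys u' \<subseteq> Poly_Mapping.keys u" unfolding u'_def
        by (auto simp: in_keys_iff lookup_minus)
      then have "monom_in n u'" using un unfolding monom_in_def by blast
      then have "u' + m \<in> G" using Suc.IH du' mG by blast
      then have "Poly_Mapping.single k 1 + (u' + m) \<in> G" using kn by (rule step)
      then show "u + m \<in> G" unfolding uu by (simp add: add.assoc)
    qed
  qed
  show ?thesis
  proof
    fix m assume "m \<in> G" then show "monom_in n m" by (rule inn)
  next
    fix m m' assume mG: "m \<in> G" and d: "mdvd m m'" and m'n: "monom_in n m'"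
    have eq: "m' = (m' - m) + m"
    proof (rule poly_mapping_eqI)
      fix x show "Poly_Mapping.lookup m' x = Poly_Mapping.lookup ((m' - m) + m) x"
        using d unfolding mdvd_def by (simp add: lookup_add lookup_minus)
    qed
    have "Poly_Mapping.keys (m' - m) \<subseteq> Poly_Mapping.keys m'"
      by (auto simp: in_keys_iff lookup_minus)
    then have "monom_in n (m' - m)" using m'n unfolding monom_in_def by blast
    then have "(m' - m) + m \<in> G" using upd mG by blast
    with eq show "m' \<in> G" by simp
  qed
qed

theorem lemma2p1:
  fixes I :: "('k::field_char_0) mpoly set" and n :: nat and G :: "monom set"
  assumes "homogeneous_ideal n I" and "artinian n I" and "is_gin n I G"
  shows "almost_revlex n G \<longleftrightarrow>
    (\<forall>i. 1 \<le> i \<and> i \<le> n - 1 \<longrightarrow>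
      (\<forall>a\<in>Jset G i. fval G (replicate (i - 1) 0 @ [sum_list a + 1]) + 1 \<le> fval G a) \<and>
      (\<forall>a\<in>Jset G i. \<forall>b\<in>Jset G i. sum_list a = sum_list b \<and>
          drl_less (list_monom a) (list_monom b) \<longrightarrow> fval G b \<le> fval G a))"
proof -
  interpret upset n G by (rule gin_upset[OF assms(1) assms(3)])
  show ?thesis
  proof
    assume AR: "almost_revlex n G"
    show "\<forall>i. 1 \<le> i \<and> i \<le> n - 1 \<longrightarrow>
      (\<forall>a\<in>Jset G i. fval G (replicate (i - 1) 0 @ [sum_list a + 1]) + 1 \<le> fval G a) \<and>
      (\<forall>a\<in>Jset G i. \<forall>b\<in>Jset G i. sum_list a = sum_list b \<and>
          drl_less (list_monom a) (list_monom b) \<longrightarrow> fval G b \<le> fval G a)"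
    proof (intro allI impI conjI ballI)
      fix i a assume i: "1 \<le> i \<and> i \<le> n - 1" and a: "a \<in> Jset G i"
      have i1: "1 \<le> i" "i < n" using i by auto
      show "fval G (replicate (i - 1) 0 @ [sum_list a + 1]) + 1 \<le> fval G a"
        by (rule AR_C1[OF AR i1 a])
    next
      fix i a b assume i: "1 \<le> i \<and> i \<le> n - 1" and a: "a \<in> Jset G i" and b: "b \<in> Jset G i"
        and h: "sum_list a = sum_list b \<and> drl_less (list_monom a) (list_monom b)"
      have i1: "1 \<le> i" "i < n" using i by auto
      show "fval G b \<le> fval G a"
        using AR_C2[OF AR i1 a b] h by blast
    qed
  next
    assume C: "\<forall>i. 1 \<le> i \<and> i \<le> n - 1 \<longrightarrow>
      (\<forall>a\<in>Jset G i. fval G (replicate (i - 1) 0 @ [sum_list a + 1]) + 1 \<le> fval G a) \<and>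
      (\<forall>a\<in>Jset G i. \<forall>b\<in>Jset G i. sum_list a = sum_list b \<and>
          drl_less (list_monom a) (list_monom b) \<longrightarrow> fval G b \<le> fval G a)"
    show "almost_revlex n G" by (rule C_AR[OF C])
  qed
qed

end
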